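(* Let $\chi,b,\nu,\mu>0$, $c\in\mathbb{R}$, $r$ as in the context, and assume $b>2\chi\mu$ and $c>\frac{\chi\mu r^*}{2\sqrt{\nu}(b-\chi\mu)}-2\sqrt{\frac{r^*(b-2\chi\mu)}{b-\chi\mu}}$. For any $u\in\mathcal{E}_1$, $U_1^*(\cdot;u)$ is the unique positive solution in $\mathcal{E}_1$ of $$0=U_{xx}+(c-\chi\Psi_x(x;u))U_x+(r(x)-\chi\nu\Psi(x;u)-(b-\chi\mu)U)U,\quad x\in\mathbb{R}.$$
   Context: $r$ is globally Hölder continuous and bounded, with finite limits $r(\pm\infty)$, $r(-\infty)<0<r(\infty)$, $r(-\infty)\le r(x)\le r(\infty)$; $r^*=\sup r=r(\infty)$. $C^b_{\rm unif}(\mathbb{R})$: bounded uniformly continuous functions; $\Psi(x;u)=\frac{\mu}{2\sqrt\nu}\int_{\mathbb{R}}e^{-\sqrt\nu|x-y|}u(y)dy$; $\mathcal{A}_u(U)=U_{xx}+(c-\chi\Psi_x(x;u))U_x+(r(x)-\chi\nu\Psi(x;u)-(b-\chi\mu)U)U$. Fix $r_1\in(r(-\infty),0)$, $x_1$ with $r(x)\le r_1$ for $x\le x_1$, $\theta_1$ the positive root of $\theta^2+c\theta+r_1=0$, and $U_1^+(x)=\min\{\frac{r^*}{b-\chi\mu},\frac{r^*}{b-\chi\mu}e^{\theta_1(x-x_1)}\}$. For $\varepsilon>0$ let $f_\varepsilon(u)=u(r^*-\varepsilon-\frac{\chi\mu r^*}{b-\chi\mu}-(b-\chi\mu)u)$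 for $u\ge0$, $f_\varepsilon=0$ on $[-\varepsilon,0)$; let $(\phi_\varepsilon,\tilde c_\varepsilon)$ be a decreasing traveling wave: $\phi_\varepsilon''+\tilde c_\varepsilon\phi_\varepsilon'+f_\varepsilon(\phi_\varepsilon)=0$, $\phi_\varepsilon(-\infty)=\frac{(r^*-\varepsilon)(b-\chi\mu)-\chi\mu r^*}{(b-\chi\mu)^2}$, $\phi_\varepsilon(\infty)=-\varepsilon$ (such waves exist with $\tilde c_\varepsilon\to2\sqrt{r^*(b-2\chi\mu)/(b-\chi\mu)}$ as $\varepsilon\to0^+$). With $\delta:=c-\frac{\chi\mu r^*}{2\sqrt\nu(b-\chi\mu)}+2\sqrt{\frac{r^*(b-2\chi\mu)}{b-\chi\mu}}>0$, fix $\varepsilon\in\big(0,\frac{r^*(b-2\chi\mu)}{b-\chi\mu}\big)$ with $\tilde c_\varepsilon>2\sqrt{\frac{r^*(b-2\chi\mu)}{b-\chi\mu}}-\frac\delta2$. Let $\psi_\varepsilon(x)=\phi_\varepsilon(-x)$, translated so that $\psi_\varepsilon(x_0)=0$ for some $x_0>x_1$ with $r(x)\ge r^*-\varepsilon$ for $x>x_0$. $U_1^-=\max\{\psi_\varepsilon,0\}$, $\mathcal{E}_1=\{u\in C^b_{\rm unif}(\mathbb{R}):U_1^-\le u\le U_1^+\}$. For $u\in\mathcal{E}_1$, $U_1^*(x;u)=\lim_{t\to\infty}U(t,x;u)$ where $U(t,x;u)$ solves $U_t=\mathcal{A}_u(U)$, $U(0,\cdot;u)=U_1^+$ (this limit exists,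 lies in $\mathcal{E}_1$ and solves the displayed elliptic equation). *)

theory Defs
  imports "HOL-Analysis.Analysis"
begin

definition Cbunif :: "(real \<Rightarrow> real) \<Rightarrow> bool" where
  "Cbunif u \<longleftrightarrow> bounded (range u) \<and> uniformly_continuous_on UNIV u"

definition Psi :: "real \<Rightarrow> real \<Rightarrow> (real \<Rightarrow> real) \<Rightarrow> real \<Rightarrow> real" where
  "Psi nu mu u x = mu / (2 * sqrt nu) * integral UNIV (\<lambda>y. exp (- sqrt nu * \<bar>x - y\<bar>) * u y)"

text \<open>The operator A_u evaluated at a point, given U, U_x, U_xx at that point.\<close>
definition Aop :: "real \<Rightarrow> real \<Rightarrow> real \<Rightarrow> real \<Rightarrow> real \<Rightarrow> (real \<Rightarrow> real) \<Rightarrow> (real \<Rightarrow> real)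
                   \<Rightarrow> real \<Rightarrow> real \<Rightarrow> real \<Rightarrow> real \<Rightarrow> real" where
  "Aop chi nu mu b c r u W W' W'' x =
     W'' + (c - chi * deriv (Psi nu mu u) x) * W'
     + (r x - chi * nu * Psi nu mu u x - (b - chi * mu) * W) * W"

definition elliptic_sol :: "real \<Rightarrow> real \<Rightarrow> real \<Rightarrow> real \<Rightarrow> real \<Rightarrow> (real \<Rightarrow> real) \<Rightarrow> (real \<Rightarrow> real)
                            \<Rightarrow> (real \<Rightarrow> real) \<Rightarrow> bool" where
  "elliptic_sol chi nu mu b c r u V \<longleftrightarrow>
     (\<exists>V' V''. \<forall>x. (V has_real_derivative V' x) (at x) \<and> (V' has_real_derivative V'' x) (at x)
        \<and> Aop chi nu mu b c r u (V x) (V' x) (V'' x) x = 0)"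

definition parab_sol :: "real \<Rightarrow> real \<Rightarrow> real \<Rightarrow> real \<Rightarrow> real \<Rightarrow> (real \<Rightarrow> real) \<Rightarrow> (real \<Rightarrow> real)
                          \<Rightarrow> (real \<Rightarrow> real) \<Rightarrow> (real \<Rightarrow> real \<Rightarrow> real) \<Rightarrow> bool" where
  "parab_sol chi nu mu b c r u U0 U \<longleftrightarrow>
     (\<forall>x. U 0 x = U0 x)
     \<and> continuous_on ({0..} \<times> UNIV) (\<lambda>p. U (fst p) (snd p))
     \<and> (\<forall>T\<ge>0. bounded ((\<lambda>p. U (fst p) (snd p)) ` ({0..T} \<times> UNIV)))
     \<and> (\<exists>Ut Ux Uxx. \<forall>t>0. \<forall>x.
          ((\<lambda>s. U s x) has_real_derivative Ut t x) (at t)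
        \<and> (U t has_real_derivative Ux t x) (at x)
        \<and> (Ux t has_real_derivative Uxx t x) (at x)
        \<and> Ut t x = Aop chi nu mu b c r u (U t x) (Ux t x) (Uxx t x) x)"

definition U1plus :: "real \<Rightarrow> real \<Rightarrow> real \<Rightarrow> real \<Rightarrow> real \<Rightarrow> real \<Rightarrow> real \<Rightarrow> real" where
  "U1plus rstar chi mu b theta1 x1 x =
     min (rstar / (b - chi * mu)) (rstar / (b - chi * mu) * exp (theta1 * (x - x1)))"

text \<open>f_eps; only its values on [-eps, infinity) matter (the wave takes values there).\<close>
definition feps :: "real \<Rightarrow> real \<Rightarrow> real \<Rightarrow> real \<Rightarrow> real \<Rightarrow> real \<Rightarrow> real" where
  "feps rstar chi mu b eps v =
     (if v \<ge> 0 then v * (rstar - eps - chi * mu * rstar / (b - chi * mu) - (b - chi * mu) * v) else 0)"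

definition decr_tw :: "(real \<Rightarrow> real) \<Rightarrow> real \<Rightarrow> (real \<Rightarrow> real) \<Rightarrow> real \<Rightarrow> real \<Rightarrow> bool" where
  "decr_tw f ct phi a z \<longleftrightarrow>
     antimono phi
     \<and> (\<exists>phi' phi''. \<forall>x. (phi has_real_derivative phi' x) (at x)
          \<and> (phi' has_real_derivative phi'' x) (at x)
          \<and> phi'' x + ct * phi' x + f (phi x) = 0)
     \<and> (phi \<longlongrightarrow> a) at_bot \<and> (phi \<longlongrightarrow> z) at_top"

definition U1minus :: "(real \<Rightarrow> real) \<Rightarrow> real \<Rightarrow> real \<Rightarrow> real" where
  "U1minus phi h x = max (phi (h - x)) 0"

definition E1 :: "real \<Rightarrow> real \<Rightarrow> real \<Rightarrow> real \<Rightarrow> real \<Rightarrow> real \<Rightarrow> (real \<Rightarrow> real) \<Rightarrow> real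
                   \<Rightarrow> (real \<Rightarrow> real) set" where
  "E1 rstar chi mu b theta1 x1 phi h =
     {v. Cbunif v \<and> (\<forall>x. U1minus phi h x \<le> v x \<and> v x \<le> U1plus rstar chi mu b theta1 x1 x)}"

end

theory Submission
  imports Defs
begin

lemma exp_int_left:
  assumes a: "(a::real) > 0"
  shows "((\<lambda>y. exp (a*y)) has_integral exp (a*x)/a) {..x}"
proof -
  have h: "((\<lambda>y::real. exp (-a*y)) has_integral exp (-a*(-x))/a) {-x..}"
    by (rule has_integral_exp_minus_to_infinity[OF a])
  hence "(\<lambda>y::real. exp (-a*y)) absolutely_integrable_on {-x..}"
    by (intro nonnegative_absolutely_integrable_1) (auto simp: integrable_on_def)
  moreover have "integral {-x..} (\<lambda>y::real. exp (-a*y)) = exp (a*x)/a"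
    using h by (simp add: integral_unique)
  ultimately have "(\<lambda>y. (\<lambda>z. exp (a*z)) (-y)) absolutely_integrable_on {-x..} \<and>
      integral {-x..} (\<lambda>y. (\<lambda>z. exp (a*z)) (-y)) = exp (a*x)/a"
    by simp
  also have "?this \<longleftrightarrow> (\<lambda>z. exp (a*z)) absolutely_integrable_on {..x} \<and> integral {..x} (\<lambda>z. exp (a*z)) = exp (a*x)/a"
    by (rule has_absolute_integral_reflect_real) auto
  finally show ?thesis
    using set_lebesgue_integral_eq_integral(1) by (metis has_integral_integral)
qed

lemma exp_int_right:
  assumes a: "(a::real) > 0"
  shows "((\<lambda>y. exp (-a*y)) has_integral exp (-a*x)/a) {x..}"
  using has_integral_exp_minus_to_infinity[OF a] by simp


lemma Psi_facts:
  fixes nu mu M :: real and u :: "real \<Rightarrow> real"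
  assumes nu: "nu > 0" and mu: "mu > 0" and uc: "continuous_on UNIV u"
    and ub: "\<And>y. 0 \<le> u y" "\<And>y. u y \<le> M"
  shows "\<exists>Psi'. (\<forall>x. (Psi nu mu u has_real_derivative Psi' x) (at x))
          \<and> (\<forall>x. 0 \<le> Psi nu mu u x \<and> Psi nu mu u x \<le> mu * M / nu)
          \<and> (\<forall>x. \<bar>Psi' x\<bar> \<le> mu * M / (2 * sqrt nu))"
proof -
  define a where "a = sqrt nu"
  have a: "a > 0" using nu by (simp add: a_def)
  have aa: "a * a = nu" using nu by (simp add: a_def)
  define K where "K = mu / (2 * a)"
  have K: "K > 0" using a mu by (simp add: K_def)
  have M0: "M \<ge> 0" using ub[of 0] by linarith
  define gA where "gA = (\<lambda>y. exp (a*y) * u y)"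
  define gB where "gB = (\<lambda>y. exp (-a*y) * u y)"
  define A where "A = (\<lambda>x. integral {..x} gA)"
  define B where "B = (\<lambda>x. integral {x..} gB)"
  have gAc: "continuous_on S gA" for S
    unfolding gA_def by (intro continuous_intros continuous_on_subset[OF uc]) auto
  have gBc: "continuous_on S gB" for S
    unfolding gB_def by (intro continuous_intros continuous_on_subset[OF uc]) auto
  have intA: "gA integrable_on {..x}" for x
  proof (rule measurable_bounded_by_integrable_imp_integrable_real)
    show "gA \<in> borel_measurable (lebesgue_on {..x})"
      by (rule continuous_imp_measurable_on_sets_lebesgue[OF gAc]) auto
    show "(\<lambda>y. M * exp (a*y)) integrable_on {..x}"
      using has_integral_mult_right[OF exp_int_left[OF a, of x], of M] by (auto simp: integrable_on_def)
    show "\<bar>gA y\<bar> \<le> M * exp (a*y)" for y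
      using ub[of y] by (simp add: gA_def)
  qed auto
  have intB: "gB integrable_on {x..}" for x
  proof (rule measurable_bounded_by_integrable_imp_integrable_real)
    show "gB \<in> borel_measurable (lebesgue_on {x..})"
      by (rule continuous_imp_measurable_on_sets_lebesgue[OF gBc]) auto
    show "(\<lambda>y. M * exp (-a*y)) integrable_on {x..}"
      using has_integral_mult_right[OF exp_int_right[OF a, of x], of M] by (auto simp: integrable_on_def)
    show "\<bar>gB y\<bar> \<le> M * exp (-a*y)" for y
      using ub[of y] by (simp add: gB_def)
  qed auto
  have Abd: "0 \<le> A x \<and> A x \<le> M * (exp (a*x)/a)" for x
  proof
    show "0 \<le> A x" unfolding A_def
      by (rule integral_nonneg[OF intA]) (use ub in \<open>auto simp: gA_def\<close>)
    have "A x \<le> integral {..x} (\<lambda>y. M * exp (a*y))" unfolding A_def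
      by (rule integral_le[OF intA])
        (use has_integral_mult_right[OF exp_int_left[OF a, of x], of M] ub in \<open>auto simp: integrable_on_def gA_def\<close>)
    also have "\<dots> = M * (exp (a*x)/a)"
      using integral_unique[OF has_integral_mult_right[OF exp_int_left[OF a, of x], of M]] by simp
    finally show "A x \<le> M * (exp (a*x)/a)" .
  qed
  have Bbd: "0 \<le> B x \<and> B x \<le> M * (exp (-a*x)/a)" for x
  proof
    show "0 \<le> B x" unfolding B_def
      by (rule integral_nonneg[OF intB]) (use ub in \<open>auto simp: gB_def\<close>)
    have "B x \<le> integral {x..} (\<lambda>y. M * exp (-a*y))" unfolding B_def
      by (rule integral_le[OF intB])
        (use has_integral_mult_right[OF exp_int_right[OF a, of x], of M] ub in \<open>auto simp: integrable_on_def gB_def\<close>)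
    also have "\<dots> = M * (exp (-a*x)/a)"
      using integral_unique[OF has_integral_mult_right[OF exp_int_right[OF a, of x], of M]] by simp
    finally show "B x \<le> M * (exp (-a*x)/a)" .
  qed
  have Psi_eq: "Psi nu mu u x = K * (exp (-a*x) * A x + exp (a*x) * B x)" for x
  proof -
    define h where "h = (\<lambda>y. exp (- sqrt nu * \<bar>x - y\<bar>) * u y)"
    have h1: "(h has_integral (exp (-a*x) * A x)) {..x}"
    proof -
      have "((\<lambda>y. exp (-a*x) * gA y) has_integral (exp (-a*x) * A x)) {..x}"
        unfolding A_def by (rule has_integral_mult_right[OF integrable_integral[OF intA]])
      moreover have "exp (-a*x) * gA y = h y" if "y \<in> {..x}" for y
      proof -
        have "- sqrt nu * \<bar>x - y\<bar> = -a*x + a*y" using that by (simp add: a_def algebra_simps)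
        hence "exp (- sqrt nu * \<bar>x - y\<bar>) = exp (-a*x) * exp (a*y)" by (simp only: exp_add[symmetric])
        thus ?thesis by (simp add: h_def gA_def)
      qed
      ultimately show ?thesis using has_integral_cong[of "{..x}" "\<lambda>y. exp (-a*x) * gA y" h] by blast
    qed
    have h2: "(h has_integral (exp (a*x) * B x)) {x..}"
    proof -
      have "((\<lambda>y. exp (a*x) * gB y) has_integral (exp (a*x) * B x)) {x..}"
        unfolding B_def by (rule has_integral_mult_right[OF integrable_integral[OF intB]])
      moreover have "exp (a*x) * gB y = h y" if "y \<in> {x..}" for y
      proof -
        have "- sqrt nu * \<bar>x - y\<bar> = a*x + -a*y" using that by (simp add: a_def algebra_simps)
        hence "exp (- sqrt nu * \<bar>x - y\<bar>) = exp (a*x) * exp (-a*y)" by (simp only: exp_add[symmetric])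
        thus ?thesis by (simp add: h_def gB_def)
      qed
      ultimately show ?thesis using has_integral_cong[of "{x..}" "\<lambda>y. exp (a*x) * gB y" h] by blast
    qed
    have "(h has_integral (exp (-a*x) * A x + exp (a*x) * B x)) ({..x} \<union> {x..})"
      by (rule has_integral_Un[OF h1 h2]) (rule negligible_subset[OF negligible_sing[of x]], auto)
    moreover have "{..x} \<union> {x..} = (UNIV::real set)" by auto
    ultimately have "integral UNIV h = exp (-a*x) * A x + exp (a*x) * B x"
      by (simp add: integral_unique)
    then show ?thesis unfolding Psi_def h_def K_def a_def by simp
  qed
  have dA: "(A has_real_derivative gA t) (at t)" for t
  proof -
    have eq: "A x = A (t-1) + integral {t-1..x} gA" if "x \<in> {t-1<..}" for x
    proof -
      have "(gA has_integral (A (t-1) + integral {t-1..x} gA)) ({..t-1} \<union> {t-1..x})"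
        unfolding A_def
        by (rule has_integral_Un[OF integrable_integral[OF intA] integrable_integral[OF integrable_continuous_interval[OF gAc]]])
          (rule negligible_subset[OF negligible_sing[of "t-1"]], auto)
      moreover have "{..t-1} \<union> {t-1..x} = {..x}" using that by auto
      ultimately show ?thesis unfolding A_def by (simp add: integral_unique)
    qed
    have "((\<lambda>x. integral {t-1..x} gA) has_real_derivative gA t) (at t within {t-1..t+1})"
      by (rule integral_has_real_derivative[OF gAc]) auto
    hence "((\<lambda>x. integral {t-1..x} gA) has_real_derivative gA t) (at t)"
      by (simp add: at_within_Icc_at)
    hence "((\<lambda>x. A (t-1) + integral {t-1..x} gA) has_real_derivative gA t) (at t)"
      by (auto intro!: derivative_eq_intros)
    thus ?thesis
      by (rule has_field_derivative_transform_within_open[of _ _ _ "{t-1<..}"]) (use eq in auto)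
  qed
  have dB: "(B has_real_derivative - gB t) (at t)" for t
  proof -
    have eq: "B x = integral {x..t+1} gB + B (t+1)" if "x \<in> {..<t+1}" for x
    proof -
      have "(gB has_integral (integral {x..t+1} gB + B (t+1))) ({x..t+1} \<union> {t+1..})"
        unfolding B_def
        by (rule has_integral_Un[OF integrable_integral[OF integrable_continuous_interval[OF gBc]] integrable_integral[OF intB]])
          (rule negligible_subset[OF negligible_sing[of "t+1"]], auto)
      moreover have "{x..t+1} \<union> {t+1..} = {x..}" using that by auto
      ultimately show ?thesis unfolding B_def by (simp add: integral_unique)
    qed
    have "((\<lambda>x. integral {x..t+1} gB) has_real_derivative - gB t) (at t within {t-1..t+1})"
      by (rule integral_has_real_derivative'[OF gBc]) auto
    hence "((\<lambda>x. integral {x..t+1} gB) has_real_derivative - gB t) (at t)"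
      by (simp add: at_within_Icc_at)
    hence "((\<lambda>x. integral {x..t+1} gB + B (t+1)) has_real_derivative - gB t) (at t)"
      by (auto intro!: derivative_eq_intros)
    thus ?thesis
      by (rule has_field_derivative_transform_within_open[of _ _ _ "{..<t+1}"]) (use eq in auto)
  qed
  define Psi' where "Psi' = (\<lambda>x. K * a * (exp (a*x) * B x - exp (-a*x) * A x))"
  have dPsi: "(Psi nu mu u has_real_derivative Psi' x) (at x)" for x
  proof -
    have "((\<lambda>x. K * (exp (-a*x) * A x + exp (a*x) * B x)) has_real_derivative
       K * ((-a * exp (-a*x)) * A x + exp (-a*x) * gA x + (a * exp (a*x)) * B x + exp (a*x) * (- gB x))) (at x)"
      by (auto intro!: derivative_eq_intros dA dB)
    moreover have "K * ((-a * exp (-a*x)) * A x + exp (-a*x) * gA x + (a * exp (a*x)) * B x + exp (a*x) * (- gB x)) = Psi' x"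
      unfolding Psi'_def gA_def gB_def
      by (simp add: algebra_simps)
    moreover have PE: "Psi nu mu u = (\<lambda>x. K * (exp (-a*x) * A x + exp (a*x) * B x))"
      using Psi_eq by (intro ext)
    ultimately show ?thesis by (simp only: PE)
  qed
  have e1: "exp (-a*x) * A x \<le> M / a" "0 \<le> exp (-a*x) * A x" for x
  proof -
    have "exp (-a*x) * A x \<le> exp (-a*x) * (M * (exp (a*x)/a))"
      using Abd[of x] by (intro mult_left_mono) auto
    also have "\<dots> = M / a" using exp_minus_inverse[of "a*x"] by (simp add: field_simps)
    finally show "exp (-a*x) * A x \<le> M / a" .
    show "0 \<le> exp (-a*x) * A x" using Abd[of x] by simp
  qed
  have e2: "exp (a*x) * B x \<le> M / a" "0 \<le> exp (a*x) * B x" for x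
  proof -
    have "exp (a*x) * B x \<le> exp (a*x) * (M * (exp (-a*x)/a))"
      using Bbd[of x] by (intro mult_left_mono) auto
    also have "\<dots> = M / a" using exp_minus_inverse[of "a*x"] by (simp add: field_simps)
    finally show "exp (a*x) * B x \<le> M / a" .
    show "0 \<le> exp (a*x) * B x" using Bbd[of x] by simp
  qed
  have "0 \<le> Psi nu mu u x \<and> Psi nu mu u x \<le> mu * M / nu" for x
  proof
    show "0 \<le> Psi nu mu u x" unfolding Psi_eq using K e1[of x] e2[of x] by simp
    have "Psi nu mu u x \<le> K * (M/a + M/a)" unfolding Psi_eq
      using K e1[of x] e2[of x] by (intro mult_left_mono) auto
    also have "\<dots> = mu * M / nu" unfolding K_def using a aa by (simp add: field_simps)
    finally show "Psi nu mu u x \<le> mu * M / nu" .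
  qed
  moreover have "\<bar>Psi' x\<bar> \<le> mu * M / (2 * sqrt nu)" for x
  proof -
    have "\<bar>exp (a*x) * B x - exp (-a*x) * A x\<bar> \<le> M / a"
      using e1[of x] e2[of x] by linarith
    hence "\<bar>Psi' x\<bar> \<le> K * a * (M / a)" unfolding Psi'_def using K a
      by (simp only: abs_mult abs_of_pos) (intro mult_left_mono, auto)
    also have "\<dots> = mu * M / (2 * sqrt nu)" unfolding K_def a_def using a a_def by (simp add: field_simps)
    finally show ?thesis .
  qed
  ultimately show ?thesis using dPsi by blast
qed



definition odesol :: "(real\<Rightarrow>real) \<Rightarrow> (real\<Rightarrow>real) \<Rightarrow> real \<Rightarrow> (real\<Rightarrow>real) \<Rightarrow> (real\<Rightarrow>real) \<Rightarrow> (real\<Rightarrow>real) \<Rightarrow> bool" where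
  "odesol p q k V V' V'' \<longleftrightarrow> (\<forall>x. (V has_real_derivative V' x) (at x) \<and> (V' has_real_derivative V'' x) (at x)
      \<and> V'' x + p x * V' x + (q x - k * V x) * V x = 0)"

lemma mvt_bound:
  fixes f f' :: "real \<Rightarrow> real"
  assumes d: "\<And>t. t \<in> {lo..hi} \<Longrightarrow> (f has_real_derivative f' t) (at t)"
    and b: "\<And>t. t \<in> {lo..hi} \<Longrightarrow> \<bar>f' t\<bar> \<le> B"
    and x: "x \<in> {lo..hi}" and y: "y \<in> {lo..hi}"
  shows "\<bar>f x - f y\<bar> \<le> B * \<bar>x - y\<bar>"
proof -
  have *: "\<bar>f s - f t\<bar> \<le> B * \<bar>s - t\<bar>" if "s \<in> {lo..hi}" "t \<in> {lo..hi}" "s < t" for s t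
  proof -
    have "\<exists>z>s. z < t \<and> f t - f s = (t - s) * f' z"
      using that by (intro MVT2) (auto intro!: d)
    then obtain z where z: "s < z" "z < t" "f t - f s = (t - s) * f' z" by blast
    have "z \<in> {lo..hi}" using z that by auto
    hence "\<bar>f' z\<bar> \<le> B" by (rule b)
    have "\<bar>f s - f t\<bar> = \<bar>f t - f s\<bar>" by (rule abs_minus_commute)
    also have "\<dots> = (t - s) * \<bar>f' z\<bar>" using z(3) that(3) by (simp add: abs_mult)
    also have "\<dots> \<le> (t - s) * B" using \<open>\<bar>f' z\<bar> \<le> B\<close> that by (intro mult_left_mono) auto
    finally show ?thesis using that by (simp add: mult.commute)
  qed
  consider "x < y" | "x = y" | "y < x" by linarith
  thus ?thesis
  proof cases
    case 1 thus ?thesis using *[OF x y] by simp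
  next
    case 2 thus ?thesis using b[OF x] by simp
  next
    case 3 thus ?thesis using *[OF y x] by (simp add: abs_minus_commute)
  qed
qed

lemma mvt_lower:
  fixes f f' :: "real \<Rightarrow> real"
  assumes ab: "a \<le> b" and d: "\<And>t. t \<in> {a..b} \<Longrightarrow> (f has_real_derivative f' t) (at t)"
    and c: "\<And>t. t \<in> {a..b} \<Longrightarrow> f' t \<ge> c"
  shows "f b - f a \<ge> c * (b - a)"
proof (cases "a = b")
  case True thus ?thesis by simp
next
  case False
  hence "\<exists>z>a. z < b \<and> f b - f a = (b - a) * f' z"
    using ab by (intro MVT2) (auto intro!: d)
  then obtain z where z: "a < z" "z < b" "f b - f a = (b - a) * f' z" by blast
  have "c \<le> f' z" using c z by auto
  thus ?thesis using z ab by (simp add: mult.commute mult_left_mono)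
qed

lemma odesol_cont:
  assumes "odesol p q k V V' V''"
  shows "continuous_on S V" "continuous_on S V'"
  using assms unfolding odesol_def
  by (auto intro!: continuous_at_imp_continuous_on DERIV_isCont)

lemma pos_sol:
  assumes sol: "odesol p q k V V' V''"
    and nn: "\<And>x. V x \<ge> 0" and pb: "\<And>x. \<bar>p x\<bar> \<le> P0" and qb: "\<And>x. \<bar>q x - k * V x\<bar> \<le> Q"
    and ex: "V x0 > 0"
  shows "V x > 0"
proof -
  have dV: "(V has_real_derivative V' x) (at x)" and dV': "(V' has_real_derivative V'' x) (at x)"
    and eq: "V'' x + p x * V' x + (q x - k * V x) * V x = 0" for x
    using sol unfolding odesol_def by auto
  have P0: "P0 \<ge> 0" using pb[of 0] by linarith
  have Q0: "Q \<ge> 0" using qb[of 0] by linarith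
  define Z where "Z = {x. V x = 0}"
  have "closed Z" unfolding Z_def
    by (rule closed_Collect_eq) (auto intro: odesol_cont[OF sol])
  moreover have "open Z" unfolding open_contains_ball
  proof
    fix z assume "z \<in> Z"
    hence Vz: "V z = 0" by (simp add: Z_def)
    have V'z: "V' z = 0"
      by (rule DERIV_local_min[OF dV zero_less_one]) (use Vz nn in auto)
    define d where "d = 1 / (2 * (1 + P0 + Q))"
    have d0: "d > 0" using P0 Q0 by (simp add: d_def)
    have d1: "d \<le> 1/2" using P0 Q0 by (simp add: d_def field_simps)
    have d2: "d * (P0 + Q) \<le> 1/2" using P0 Q0 by (simp add: d_def field_simps)
    define I where "I = {z-d..z+d}"
    have zI: "z \<in> I" using d0 by (simp add: I_def)
    obtain y1 where y1: "y1 \<in> I" "\<And>y. y \<in> I \<Longrightarrow> \<bar>V y\<bar> \<le> \<bar>V y1\<bar>"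
      using continuous_attains_sup[of I "\<lambda>y. \<bar>V y\<bar>"] zI odesol_cont[OF sol]
      by (force simp: I_def intro: continuous_intros)
    obtain y2 where y2: "y2 \<in> I" "\<And>y. y \<in> I \<Longrightarrow> \<bar>V' y\<bar> \<le> \<bar>V' y2\<bar>"
      using continuous_attains_sup[of I "\<lambda>y. \<bar>V' y\<bar>"] zI odesol_cont[OF sol]
      by (force simp: I_def intro: continuous_intros)
    define m1 where "m1 = \<bar>V y1\<bar>"
    define m2 where "m2 = \<bar>V' y2\<bar>"
    have dist: "\<bar>t - z\<bar> \<le> d" if "t \<in> I" for t using that by (auto simp: I_def)
    have b1: "\<bar>V t\<bar> \<le> m2 * d" if "t \<in> I" for t
    proof -
      have "\<bar>V t - V z\<bar> \<le> m2 * \<bar>t - z\<bar>"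
        by (rule mvt_bound[where lo="z-d" and hi="z+d"]) (use dV y2 that zI in \<open>auto simp: I_def m2_def\<close>)
      also have "\<dots> \<le> m2 * d" using dist[OF that] by (intro mult_left_mono) (auto simp: m2_def)
      finally show ?thesis using Vz by simp
    qed
    have b2: "\<bar>V'' t\<bar> \<le> P0 * m2 + Q * m1" if "t \<in> I" for t
    proof -
      have "V'' t = - (p t * V' t) - (q t - k * V t) * V t" using eq[of t] by linarith
      hence "\<bar>V'' t\<bar> \<le> \<bar>p t\<bar> * \<bar>V' t\<bar> + \<bar>q t - k * V t\<bar> * \<bar>V t\<bar>"
        by (simp add: abs_mult[symmetric])
      also have "\<dots> \<le> P0 * m2 + Q * m1"
        using y1(2)[OF that] y2(2)[OF that] pb[of t] qb[of t] P0 Q0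
        by (intro add_mono mult_mono) (auto simp: m1_def m2_def)
      finally show ?thesis .
    qed
    have b3: "\<bar>V' t\<bar> \<le> (P0 * m2 + Q * m1) * d" if "t \<in> I" for t
    proof -
      have "\<bar>V' t - V' z\<bar> \<le> (P0 * m2 + Q * m1) * \<bar>t - z\<bar>"
        by (rule mvt_bound[where lo="z-d" and hi="z+d"]) (use dV' b2 that zI in \<open>auto simp: I_def\<close>)
      also have "\<dots> \<le> (P0 * m2 + Q * m1) * d" using dist[OF that] P0 Q0
        by (intro mult_left_mono) (auto simp: m1_def m2_def)
      finally show ?thesis using V'z by simp
    qed
    have m1: "m1 \<le> m2 * d" using b1[OF y1(1)] by (simp add: m1_def)
    have m2: "m2 \<le> (P0 * m2 + Q * m1) * d" using b3[OF y2(1)] by (simp add: m2_def)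
    have "m2 * d \<le> m2 * 1" using d1 by (intro mult_left_mono) (auto simp: m2_def)
    hence "Q * m1 \<le> Q * m2" using m1 Q0
      by (intro mult_left_mono) auto
    hence "m2 \<le> (P0 * m2 + Q * m2) * d" using m2 d0 by (smt (verit) mult_right_mono)
    also have "\<dots> = m2 * (d * (P0 + Q))" by (simp add: algebra_simps)
    also have "\<dots> \<le> m2 * (1/2)" using d2 by (intro mult_left_mono) (auto simp: m2_def)
    finally have "m2 = 0" by (simp add: m2_def)
    hence "m1 = 0" using m1 by (simp add: m1_def)
    hence "V t = 0" if "t \<in> I" for t using y1(2)[OF that] by (simp add: m1_def)
    moreover have "ball z d \<subseteq> I" by (auto simp: I_def dist_real_def)
    ultimately show "\<exists>e>0. ball z e \<subseteq> Z" using d0 by (auto simp: Z_def)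
  qed
  moreover have "x0 \<notin> Z" using ex by (auto simp: Z_def)
  hence "Z \<noteq> UNIV" by blast
  ultimately have "Z = {}" using clopen by blast
  hence "V x \<noteq> 0" by (auto simp: Z_def)
  thus ?thesis using nn[of x] by linarith
qed


lemma grad_bound:
  assumes sol: "odesol p q k V V' V''"
    and dP: "\<And>y. (P has_real_derivative p y) (at y)"
    and PL: "\<And>y. y \<in> {x..x+1} \<Longrightarrow> P y \<le> P x + L"
    and qb: "\<And>y. y \<in> {x..x+1} \<Longrightarrow> \<bar>q y - k * V y\<bar> \<le> Q"
    and Vb: "\<And>y. y \<in> {x..x+1} \<Longrightarrow> \<bar>V y\<bar> \<le> m"
  shows "\<bar>V' x\<bar> \<le> exp L * (2 + Q) * m"
proof -
  have dV: "(V has_real_derivative V' y) (at y)" and dV': "(V' has_real_derivative V'' y) (at y)"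
    and eq: "V'' y + p y * V' y + (q y - k * V y) * V y = 0" for y
    using sol unfolding odesol_def by auto
  have Q0: "Q \<ge> 0" using qb[of x] by auto
  have m0: "m \<ge> 0" using Vb[of x] by auto
  have "\<exists>z>x. z < x+1 \<and> V (x+1) - V x = (x + 1 - x) * V' z"
    by (intro MVT2) (auto intro!: dV)
  then obtain z where z: "x < z" "z < x+1" "V (x+1) - V x = V' z" by auto
  have Vz: "\<bar>V' z\<bar> \<le> 2 * m" using z(3) Vb[of x] Vb[of "x+1"] by auto
  define F where "F = (\<lambda>y. exp (P y) * V' y)"
  define F' where "F' = (\<lambda>y. - (exp (P y) * ((q y - k * V y) * V y)))"
  have dF: "(F has_real_derivative F' y) (at y)" for y
  proof -
    have "(F has_real_derivative exp (P y) * p y * V' y + exp (P y) * V'' y) (at y)"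
      unfolding F_def by (auto intro!: derivative_eq_intros dP dV')
    moreover have "exp (P y) * p y * V' y + exp (P y) * V'' y = F' y"
    proof -
      have "V'' y = - (p y * V' y) - (q y - k * V y) * V y" using eq[of y] by linarith
      show ?thesis unfolding F'_def by (simp only: \<open>V'' y = _\<close>) (simp add: algebra_simps)
    qed
    ultimately show ?thesis by simp
  qed
  have bF: "\<bar>F' t\<bar> \<le> exp (P x + L) * (Q * m)" if "t \<in> {x..x+1}" for t
  proof -
    have "\<bar>F' t\<bar> = exp (P t) * (\<bar>q t - k * V t\<bar> * \<bar>V t\<bar>)" by (simp add: F'_def abs_mult)
    also have "\<dots> \<le> exp (P x + L) * (Q * m)"
      using PL[OF that] qb[OF that] Vb[OF that] Q0 by (intro mult_mono) auto
    finally show ?thesis .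
  qed
  have "\<bar>F x - F z\<bar> \<le> exp (P x + L) * (Q * m) * \<bar>x - z\<bar>"
    by (rule mvt_bound[where lo=x and hi="x+1"]) (use dF bF z in auto)
  also have "\<dots> \<le> exp (P x + L) * (Q * m) * 1" using z Q0 m0 by (intro mult_left_mono) auto
  finally have 1: "\<bar>F x - F z\<bar> \<le> exp (P x + L) * (Q * m)" by simp
  have 2: "\<bar>F z\<bar> \<le> exp (P x + L) * (2 * m)"
    unfolding F_def abs_mult using PL[of z] z Vz by (intro mult_mono) auto
  have "exp (P x) * \<bar>V' x\<bar> = \<bar>F x\<bar>" by (simp add: F_def abs_mult)
  also have "\<dots> \<le> exp (P x + L) * (Q * m) + exp (P x + L) * (2 * m)" using 1 2 by linarith
  also have "\<dots> = exp (P x) * (exp L * (2 + Q) * m)" by (simp add: exp_add algebra_simps)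
  finally show ?thesis by simp
qed


lemma cont_neg_near:
  fixes D :: "real \<Rightarrow> real"
  assumes "isCont D a" "D a < 0"
  shows "\<exists>s>0. \<forall>y. \<bar>y - a\<bar> < s \<longrightarrow> D y < 0"
proof -
  have "D \<midarrow>a\<rightarrow> D a" using assms(1) by (simp add: isCont_def)
  from LIM_D[OF this, of "- D a"] assms(2) obtain s where s: "s > 0"
    "\<forall>x. x \<noteq> a \<and> norm (x - a) < s \<longrightarrow> norm (D x - D a) < - D a" by auto
  have "D y < 0" if "\<bar>y - a\<bar> < s" for y
  proof (cases "y = a")
    case True thus ?thesis using assms by simp
  next
    case False thus ?thesis using s(2)[rule_format, of y] that by auto
  qed
  thus ?thesis using s(1) by blast
qed

lemma compare:
  fixes V1 V1' V1'' V2 V2' V2'' p q P :: "real \<Rightarrow> real"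
  assumes s1: "odesol p q k V1 V1' V1''" and s2: "odesol p q k V2 V2' V2''"
    and dP: "\<And>y. (P has_real_derivative p y) (at y)"
    and k: "k > 0"
    and pos1: "\<And>x. V1 x > 0" and pos2: "\<And>x. V2 x > 0"
    and ub1: "\<And>x. V1 x \<le> M" and ub2: "\<And>x. V2 x \<le> M"
    and lb: "\<And>x. x \<ge> X0 \<Longrightarrow> \<delta> \<le> V1 x \<and> \<delta> \<le> V2 x" and d0: "\<delta> > 0"
    and pb: "\<And>x. \<bar>p x\<bar> \<le> P0"
    and gb: "\<And>x. \<bar>V2' x\<bar> \<le> C1"
    and Wlim: "((\<lambda>x. exp (P x) * (V1' x * V2 x - V1 x * V2' x)) \<longlongrightarrow> 0) at_bot"
  shows "V1 x \<le> V2 x"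
proof -
  have dV1: "(V1 has_real_derivative V1' y) (at y)" and dV1': "(V1' has_real_derivative V1'' y) (at y)"
    and eq1: "V1'' y = - (p y * V1' y) - (q y - k * V1 y) * V1 y" for y
    using s1 unfolding odesol_def by (auto simp: algebra_simps)
  have dV2: "(V2 has_real_derivative V2' y) (at y)" and dV2': "(V2' has_real_derivative V2'' y) (at y)"
    and eq2: "V2'' y = - (p y * V2' y) - (q y - k * V2 y) * V2 y" for y
    using s2 unfolding odesol_def by (auto simp: algebra_simps)
  define D where "D = (\<lambda>x. V1 x - V2 x)"
  define N where "N = (\<lambda>x. V1' x * V2 x - V1 x * V2' x)"
  define W where "W = (\<lambda>x. exp (P x) * N x)"
  have dD: "(D has_real_derivative V1' y - V2' y) (at y)" for y
    unfolding D_def by (auto intro!: derivative_eq_intros dV1 dV2)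
  have cD: "isCont D y" for y using dD by (rule DERIV_isCont)
  have cDon: "continuous_on UNIV D" by (auto intro!: continuous_at_imp_continuous_on cD)
  have dN: "(N has_real_derivative (- p y * N y + k * V1 y * V2 y * D y)) (at y)" for y
  proof -
    have "(N has_real_derivative (V1'' y * V2 y + V1' y * V2' y - (V1' y * V2' y + V1 y * V2'' y))) (at y)"
      unfolding N_def by (auto intro!: derivative_eq_intros dV1 dV2 dV1' dV2')
    moreover have "V1'' y * V2 y + V1' y * V2' y - (V1' y * V2' y + V1 y * V2'' y) = - p y * N y + k * V1 y * V2 y * D y"
      unfolding eq1 eq2 N_def D_def by (simp add: algebra_simps)
    ultimately show ?thesis by simp
  qed
  have dW: "(W has_real_derivative exp (P y) * (k * V1 y * V2 y * D y)) (at y)" for y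
  proof -
    have "(W has_real_derivative exp (P y) * p y * N y + exp (P y) * (- p y * N y + k * V1 y * V2 y * D y)) (at y)"
      unfolding W_def by (auto intro!: derivative_eq_intros dP dN)
    thus ?thesis by (simp add: algebra_simps)
  qed
  have Wmono: "W a \<le> W b" if "a \<le> b" "\<And>t. t \<in> {a..b} \<Longrightarrow> D t \<ge> 0" for a b
  proof (rule DERIV_nonneg_imp_nondecreasing[OF that(1)])
    fix t assume "a \<le> t" "t \<le> b"
    hence "D t \<ge> 0" using that(2) by auto
    thus "\<exists>y. (W has_real_derivative y) (at t) \<and> 0 \<le> y"
      using dW[of t] pos1[of t] pos2[of t] k by (intro exI[of _ "exp (P t) * (k * V1 t * V2 t * D t)"]) auto
  qed
  have Wstrict: "W a < W b" if "a < b" "\<And>t. t \<in> {a..b} \<Longrightarrow> D t > 0" for a b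
  proof (rule DERIV_pos_imp_increasing[OF that(1)])
    fix t assume "a \<le> t" "t \<le> b"
    hence "D t > 0" using that(2) by auto
    thus "\<exists>y. (W has_real_derivative y) (at t) \<and> 0 < y"
      using dW[of t] pos1[of t] pos2[of t] k by (intro exI[of _ "exp (P t) * (k * V1 t * V2 t * D t)"]) auto
  qed
  have step1: "W xs > 0" if Dxs: "D xs > 0" for xs
  proof (cases "\<forall>y\<le>xs. D y > 0")
    case True
    have "0 \<le> W (xs - 1)"
    proof (rule tendsto_le[of at_bot "\<lambda>_. W (xs - 1)" "W (xs - 1)" W 0])
      show "(W \<longlongrightarrow> 0) at_bot" using Wlim by (simp add: W_def N_def)
      show "\<forall>\<^sub>F x in at_bot. W x \<le> W (xs - 1)"
        unfolding eventually_at_bot_linorder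
      proof (intro exI[of _ "xs - 1"] allI impI)
        fix n assume "n \<le> xs - 1"
        show "W n \<le> W (xs - 1)"
        proof (rule Wmono)
          fix t assume "t \<in> {n..xs-1}"
          hence "t \<le> xs" by auto
          thus "D t \<ge> 0" using True less_imp_le by blast
        qed (use \<open>n \<le> xs - 1\<close> in auto)
      qed
    qed auto
    also have "W (xs - 1) < W xs" by (rule Wstrict) (use True in auto)
    finally show ?thesis .
  next
    case False
    define L where "L = {y. y \<le> xs \<and> D y \<le> 0}"
    have Lne: "L \<noteq> {}" using False by (auto simp: L_def)
    have Lbdd: "bdd_above L" by (auto simp: L_def bdd_above_def)
    have Lcl: "closed L" unfolding L_def
      by (intro closed_Collect_conj closed_Collect_le cDon continuous_intros)
    define a where "a = Sup L"
    have aL: "a \<in> L" unfolding a_def by (rule closed_contains_Sup[OF Lne Lbdd Lcl])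
    have a1: "a \<le> xs" "D a \<le> 0" using aL by (auto simp: L_def)
    have axs: "a < xs" using a1 Dxs by (cases "a = xs") auto
    have posr: "D y > 0" if "a < y" "y \<le> xs" for y
    proof (rule ccontr)
      assume "\<not> D y > 0"
      hence "y \<in> L" using that by (auto simp: L_def)
      hence "y \<le> a" unfolding a_def by (rule cSup_upper[OF _ Lbdd])
      thus False using that by simp
    qed
    have Da: "D a = 0"
    proof (rule ccontr)
      assume "D a \<noteq> 0"
      hence "D a < 0" using a1 by simp
      then obtain s where s: "s > 0" "\<forall>y. \<bar>y - a\<bar> < s \<longrightarrow> D y < 0"
        using cont_neg_near[OF cD] by blast
      have e: "0 < min s (xs - a) / 2" "min s (xs - a) / 2 < s" "min s (xs - a) / 2 < xs - a" using s(1) axs by (auto simp: min_def)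
      have "D (a + min s (xs - a) / 2) < 0" using s(2)[rule_format, of "a + min s (xs - a) / 2"] e by (auto simp: abs_if)
      moreover have "D (a + min s (xs - a) / 2) > 0" using e by (intro posr) linarith+
      ultimately show False by simp
    qed
    have D'a: "V1' a - V2' a \<ge> 0"
    proof (rule ccontr)
      assume "\<not> V1' a - V2' a \<ge> 0"
      then obtain d where d: "d > 0" "\<forall>h>0. h < d \<longrightarrow> D (a + h) < D a"
        using DERIV_neg_dec_right[OF dD[of a]] by auto
      have e: "0 < min d (xs - a) / 2" "min d (xs - a) / 2 < d" "min d (xs - a) / 2 < xs - a" using d(1) axs by (auto simp: min_def)
      have "D (a + min d (xs - a) / 2) < 0" using d(2)[rule_format, of "min d (xs - a) / 2"] Da e by (auto simp: abs_if)
      moreover have "D (a + min d (xs - a) / 2) > 0" using e by (intro posr) linarith+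
      ultimately show False by simp
    qed
    have "W a = exp (P a) * (V2 a * (V1' a - V2' a))"
      using Da unfolding W_def N_def D_def by (simp add: algebra_simps)
    hence Wa: "W a \<ge> 0" using D'a pos2[of a] by simp
    define m where "m = (a + xs) / 2"
    have "W a \<le> W m"
    proof (rule Wmono)
      show "a \<le> m" using axs by (simp add: m_def)
      fix t assume t: "t \<in> {a..m}"
      show "D t \<ge> 0"
      proof (cases "t = a")
        case True thus ?thesis using Da by simp
      next
        case False
        hence "a < t" "t \<le> xs" using t axs by (auto simp: m_def)
        thus ?thesis using posr less_imp_le by blast
      qed
    qed
    also have "W m < W xs"
    proof (rule Wstrict)
      show "m < xs" using axs by (simp add: m_def)
      fix t assume t: "t \<in> {m..xs}"
      hence "a < t" "t \<le> xs" using axs by (auto simp: m_def)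
      thus "D t > 0" using posr by blast
    qed
    finally show ?thesis using Wa by simp
  qed
  show ?thesis
  proof (rule ccontr)
    assume "\<not> V1 x \<le> V2 x"
    hence Dx: "D x > 0" by (simp add: D_def)
    show False
    proof (cases "\<exists>y\<ge>x. D y \<le> 0")
      case True
      define R where "R = {y. x \<le> y \<and> D y \<le> 0}"
      have Rne: "R \<noteq> {}" using True by (auto simp: R_def)
      have Rbdd: "bdd_below R" by (auto simp: R_def bdd_below_def)
      have Rcl: "closed R" unfolding R_def
        by (intro closed_Collect_conj closed_Collect_le cDon continuous_intros)
      define b where "b = Inf R"
      have bR: "b \<in> R" unfolding b_def by (rule closed_contains_Inf[OF Rne Rbdd Rcl])
      have b1: "x \<le> b" "D b \<le> 0" using bR by (auto simp: R_def)
      have xb: "x < b" using b1 Dx by (cases "b = x") auto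
      have posl: "D y > 0" if "x \<le> y" "y < b" for y
      proof (rule ccontr)
        assume "\<not> D y > 0"
        hence "y \<in> R" using that by (auto simp: R_def)
        hence "b \<le> y" unfolding b_def by (rule cInf_lower[OF _ Rbdd])
        thus False using that by simp
      qed
      have Db: "D b = 0"
      proof (rule ccontr)
        assume "D b \<noteq> 0"
        hence "D b < 0" using b1 by simp
        then obtain s where s: "s > 0" "\<forall>y. \<bar>y - b\<bar> < s \<longrightarrow> D y < 0"
          using cont_neg_near[OF cD] by blast
        have e: "0 < min s (b - x) / 2" "min s (b - x) / 2 < s" "min s (b - x) / 2 < b - x" using s(1) xb by (auto simp: min_def)
        have "D (b - min s (b - x) / 2) < 0" using s(2)[rule_format, of "b - min s (b - x) / 2"] e by (auto simp: abs_if)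
        moreover have "D (b - min s (b - x) / 2) > 0" using e by (intro posl) linarith+
        ultimately show False by simp
      qed
      have D'b: "V1' b - V2' b \<le> 0"
      proof (rule ccontr)
        assume "\<not> V1' b - V2' b \<le> 0"
        then obtain d where d: "d > 0" "\<forall>h>0. h < d \<longrightarrow> D (b - h) < D b"
          using DERIV_pos_inc_left[OF dD[of b]] by auto
        have e: "0 < min d (b - x) / 2" "min d (b - x) / 2 < d" "min d (b - x) / 2 < b - x" using d(1) xb by (auto simp: min_def)
        have "D (b - min d (b - x) / 2) < 0" using d(2)[rule_format, of "min d (b - x) / 2"] Db e by (auto simp: abs_if)
        moreover have "D (b - min d (b - x) / 2) > 0" using e by (intro posl) linarith+
        ultimately show False by simp
      qed
      have "W b = exp (P b) * (V2 b * (V1' b - V2' b))"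
        using Db unfolding W_def N_def D_def by (simp add: algebra_simps)
      hence Wb: "W b \<le> 0" using D'b pos2[of b] by (simp add: mult_nonneg_nonpos)
      have "W x \<le> W b"
      proof (rule Wmono)
        show "x \<le> b" using xb by simp
        fix t assume t: "t \<in> {x..b}"
        show "D t \<ge> 0"
        proof (cases "t = b")
          case True thus ?thesis using Db by simp
        next
          case False
          hence "x \<le> t" "t < b" using t by auto
          thus ?thesis using posl less_imp_le by blast
        qed
      qed
      thus False using step1[OF Dx] Wb by simp
    next
      case False
      hence Dpos: "D y > 0" if "y \<ge> x" for y using that by (meson not_le)
      define X where "X = max x X0"
      have Npos: "N y > 0" if "y \<ge> X" for y
        using step1[OF Dpos[of y]] that by (simp add: X_def W_def zero_less_mult_iff)
      define w where "w = (\<lambda>y. V1 y / V2 y)"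
      have V2nz: "V2 y \<noteq> 0" for y using pos2[of y] by simp
      have dw: "(w has_real_derivative N y / (V2 y)^2) (at y)" for y
      proof -
        have "(w has_real_derivative (V1' y * V2 y - V1 y * V2' y) / (V2 y * V2 y)) (at y)"
          unfolding w_def by (rule DERIV_divide[OF dV1 dV2 V2nz])
        thus ?thesis by (simp add: N_def power2_eq_square)
      qed
      have M0: "M > 0" using ub1[of 0] pos1[of 0] by simp
      have wle: "w y \<le> M / \<delta>" if "y \<ge> X" for y
      proof -
        have "V1 y / V2 y \<le> M / V2 y" using ub1[of y] pos2[of y] by (simp add: divide_right_mono)
        also have "\<dots> \<le> M / \<delta>" using lb[of y] that d0 M0 by (intro divide_left_mono) (auto simp: X_def)
        finally show ?thesis by (simp add: w_def)
      qed
      have wge0: "w y \<ge> 0" for y using pos1[of y] pos2[of y] by (simp add: w_def)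
      have wmono: "w y \<ge> w X" if "y \<ge> X" for y
      proof -
        have "w y - w X \<ge> 0 * (y - X)"
        proof (rule mvt_lower[OF that])
          fix t assume t: "t \<in> {X..y}"
          show "(w has_real_derivative N t / (V2 t)^2) (at t)" by (rule dw)
          show "N t / (V2 t)^2 \<ge> 0" using Npos[of t] t by simp
        qed
        thus ?thesis by simp
      qed
      define \<eta> where "\<eta> = w X - 1"
      have eta: "\<eta> > 0" using Dpos[of X] pos2[of X] by (simp add: \<eta>_def w_def D_def X_def field_simps)
      define G where "G = P0 + 2 * C1 / \<delta>"
      define h where "h = (\<lambda>y. N y / (V2 y)^2 + G * w y)"
      define H where "H = (\<lambda>y. N y / (V2 y)^2 * (G - p y - 2 * V2' y / V2 y) + k * V1 y * D y / V2 y)"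
      have dh: "(h has_real_derivative H y) (at y)" for y
      proof -
        have "(h has_real_derivative ((- p y * N y + k * V1 y * V2 y * D y) * (V2 y)^2 - N y * (2 * V2 y * V2' y)) / ((V2 y)^2 * (V2 y)^2)
               + G * (N y / (V2 y)^2)) (at y)"
          unfolding h_def
          by (auto intro!: derivative_eq_intros dN dV2 dw simp: V2nz power2_eq_square ac_simps)
        moreover have "((- p y * N y + k * V1 y * V2 y * D y) * (V2 y)^2 - N y * (2 * V2 y * V2' y)) / ((V2 y)^2 * (V2 y)^2)
               + G * (N y / (V2 y)^2) = H y"
          unfolding H_def using V2nz[of y] by (simp add: field_simps power2_eq_square)
        ultimately show ?thesis by simp
      qed
      define \<gamma> where "\<gamma> = k * \<delta> * (\<delta> * \<eta>) / M"
      have gam: "\<gamma> > 0" using k d0 eta M0 by (simp add: \<gamma>_def)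
      have Hge: "H y \<ge> \<gamma>" if "y \<ge> X" for y
      proof -
        have V2y: "\<delta> \<le> V2 y" "\<delta> \<le> V1 y" using lb[of y] that by (auto simp: X_def)
        have "V2' y / V2 y \<le> C1 / \<delta>"
        proof -
          have "V2' y / V2 y \<le> \<bar>V2' y\<bar> / V2 y" using pos2[of y] by (simp add: divide_right_mono)
          also have "\<dots> \<le> C1 / V2 y" using gb[of y] pos2[of y] by (simp add: divide_right_mono)
          also have "\<dots> \<le> C1 / \<delta>" using V2y d0 gb[of y] by (intro divide_left_mono) auto
          finally show ?thesis .
        qed
        hence "G - p y - 2 * V2' y / V2 y \<ge> 0" using pb[of y] by (simp add: G_def)
        hence t1: "N y / (V2 y)^2 * (G - p y - 2 * V2' y / V2 y) \<ge> 0"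
          using Npos[OF that] by simp
        have "w y - 1 \<ge> \<eta>" using wmono[OF that] by (simp add: \<eta>_def)
        have Dy: "D y = V2 y * (w y - 1)" using V2nz[of y] by (simp add: D_def w_def field_simps)
        have "D y \<ge> \<delta> * \<eta>" unfolding Dy using V2y \<open>w y - 1 \<ge> \<eta>\<close> eta d0 by (intro mult_mono) auto
        hence "k * \<delta> * (\<delta> * \<eta>) \<le> k * V1 y * D y" using V2y k d0 eta by (intro mult_mono) auto
        moreover have "0 \<le> k * V1 y * D y"
          using k pos1[of y] Dpos[of y] that by (simp add: X_def)
        ultimately have "\<gamma> \<le> k * V1 y * D y / V2 y" unfolding \<gamma>_def
          using ub2[of y] pos2[of y] k d0 eta by (intro frac_le) auto
        thus ?thesis using t1 by (simp add: H_def)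
      qed
      have hgrow: "h y - h X \<ge> \<gamma> * (y - X)" if "y \<ge> X" for y
        by (rule mvt_lower[OF that]) (use dh Hge in auto)
      define Y where "Y = X + (\<bar>h X\<bar> + G * (M / \<delta>) + 1) / \<gamma>"
      have G0: "G \<ge> 0" using pb[of 0] gb[of 0] d0 by (simp add: G_def)
      have YX: "Y \<ge> X" using gam G0 M0 d0 by (simp add: Y_def)
      have w'ge: "N y / (V2 y)^2 \<ge> 1" if "y \<ge> Y" for y
      proof -
        have yX: "y \<ge> X" using that YX by simp
        have "\<gamma> * (y - X) \<ge> \<gamma> * (Y - X)" using that gam by (intro mult_left_mono) auto
        also have "\<gamma> * (Y - X) = \<bar>h X\<bar> + G * (M / \<delta>) + 1" using gam by (simp add: Y_def)
        finally have "h y \<ge> h X + \<bar>h X\<bar> + G * (M / \<delta>) + 1" using hgrow[OF yX] by simp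
        moreover have "G * w y \<le> G * (M / \<delta>)" using wle[OF yX] G0 by (intro mult_left_mono) auto
        ultimately show ?thesis by (simp add: h_def)
      qed
      have "w (Y + (M / \<delta> + 1)) - w Y \<ge> 1 * (Y + (M / \<delta> + 1) - Y)"
        by (rule mvt_lower[of Y _ w "\<lambda>y. N y / (V2 y)^2"]) (use dw w'ge M0 d0 in auto)
      moreover have "w (Y + (M / \<delta> + 1)) \<le> M / \<delta>" using YX divide_pos_pos[OF M0 d0] by (intro wle) auto
      moreover have "w Y \<ge> 0" by (rule wge0)
      ultimately show False by simp
    qed
  qed
qed


lemma exp_lin_at_bot:
  assumes "(l::real) > 0"
  shows "((\<lambda>x. exp (l * x)) \<longlongrightarrow> 0) at_bot"
proof -
  have "filterlim (\<lambda>x. l * x) at_bot at_bot"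
    using filterlim_tendsto_pos_mult_at_bot[OF tendsto_const assms filterlim_ident] by simp
  from filterlim_compose[OF exp_at_bot this] show ?thesis .
qed

theorem lemma3p5:
  fixes chi b nu mu c rm rstar r1 x1 theta1 eps ctil h x0 :: real
    and r phi u Ustar :: "real \<Rightarrow> real"
    and U :: "real \<Rightarrow> real \<Rightarrow> real"
  assumes chi: "chi > 0" and b: "b > 0" and nu: "nu > 0" and mu: "mu > 0"
    and b_gt: "b > 2 * chi * mu"
    and r_hoelder: "\<exists>C \<alpha>. 0 < \<alpha> \<and> \<alpha> \<le> 1 \<and> (\<forall>x y. \<bar>r x - r y\<bar> \<le> C * \<bar>x - y\<bar> powr \<alpha>)"
    and r_bdd: "bounded (range r)"
    and r_bot: "(r \<longlongrightarrow> rm) at_bot" and r_top: "(r \<longlongrightarrow> rstar) at_top"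
    and rm_neg: "rm < 0" and rstar_pos: "0 < rstar"
    and r_range: "\<forall>x. rm \<le> r x \<and> r x \<le> rstar"
    and c_gt: "c > chi * mu * rstar / (2 * sqrt nu * (b - chi * mu))
                   - 2 * sqrt (rstar * (b - 2 * chi * mu) / (b - chi * mu))"
    and r1: "rm < r1" "r1 < 0"
    and x1: "\<forall>x\<le>x1. r x \<le> r1"
    and theta1: "theta1 > 0" "theta1 ^ 2 + c * theta1 + r1 = 0"
    and eps: "0 < eps" "eps < rstar * (b - 2 * chi * mu) / (b - chi * mu)"
    and wave: "decr_tw (feps rstar chi mu b eps) ctil phi
                 (((rstar - eps) * (b - chi * mu) - chi * mu * rstar) / (b - chi * mu) ^ 2) (- eps)"
    and ctil: "ctil > 2 * sqrt (rstar * (b - 2 * chi * mu) / (b - chi * mu))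
                 - (c - chi * mu * rstar / (2 * sqrt nu * (b - chi * mu))
                    + 2 * sqrt (rstar * (b - 2 * chi * mu) / (b - chi * mu))) / 2"
    and x0: "x0 > x1" "\<forall>x>x0. r x \<ge> rstar - eps" "phi (h - x0) = 0"
    and u: "u \<in> E1 rstar chi mu b theta1 x1 phi h"
    and U: "parab_sol chi nu mu b c r u (U1plus rstar chi mu b theta1 x1) U"
    and U_lim: "\<forall>x. ((\<lambda>t. U t x) \<longlongrightarrow> Ustar x) at_top"
    and Ustar_E1: "Ustar \<in> E1 rstar chi mu b theta1 x1 phi h"
    and Ustar_sol: "elliptic_sol chi nu mu b c r u Ustar"
  shows "(\<forall>x. Ustar x > 0) \<and>
         (\<forall>V \<in> E1 rstar chi mu b theta1 x1 phi h.
            (\<forall>x. V x > 0) \<longrightarrow> elliptic_sol chi nu mu b c r u V \<longrightarrow> V = Ustar)"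
proof -
  define k where "k = b - chi * mu"
  have "chi * mu > 0" using chi mu by simp
  hence k: "k > 0" using b_gt unfolding k_def by linarith
  define M where "M = rstar / k"
  have M: "M > 0" using k rstar_pos by (simp add: M_def)
  define E where "E = E1 rstar chi mu b theta1 x1 phi h"
  have Ebd: "0 \<le> V x \<and> V x \<le> M \<and> V x \<le> M * exp (theta1 * (x - x1)) \<and> U1minus phi h x \<le> V x"
    if "V \<in> E" for V x
  proof -
    have "U1minus phi h x \<le> V x" "V x \<le> U1plus rstar chi mu b theta1 x1 x"
      using that by (auto simp: E_def E1_def)
    moreover have "U1minus phi h x \<ge> 0" by (simp add: U1minus_def)
    ultimately show ?thesis unfolding U1plus_def M_def k_def by auto
  qed
  have Econt: "continuous_on UNIV V" if "V \<in> E" for V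
    using that by (auto simp: E_def E1_def Cbunif_def intro: uniformly_continuous_imp_continuous)
  have uE: "u \<in> E" using u by (simp add: E_def)
  obtain Psi' where dPsi: "\<And>x. (Psi nu mu u has_real_derivative Psi' x) (at x)"
    and Psib: "\<And>x. 0 \<le> Psi nu mu u x \<and> Psi nu mu u x \<le> mu * M / nu"
    and Psi'b: "\<And>x. \<bar>Psi' x\<bar> \<le> mu * M / (2 * sqrt nu)"
    using Psi_facts[OF nu mu Econt[OF uE], of M] Ebd[OF uE] by blast
  define Ps where "Ps = Psi nu mu u"
  define p where "p = (\<lambda>x. c - chi * Psi' x)"
  define q where "q = (\<lambda>x. r x - chi * nu * Ps x)"
  define P where "P = (\<lambda>x. c * x - chi * Ps x)"
  have dP: "(P has_real_derivative p y) (at y)" for y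
    unfolding P_def p_def Ps_def by (auto intro!: derivative_eq_intros dPsi)
  have conv: "\<exists>V' V''. odesol p q k V V' V''" if Vs: "elliptic_sol chi nu mu b c r u V" for V
  proof -
    obtain V' V'' where "\<forall>x. (V has_real_derivative V' x) (at x) \<and> (V' has_real_derivative V'' x) (at x)
        \<and> Aop chi nu mu b c r u (V x) (V' x) (V'' x) x = 0"
      using Vs unfolding elliptic_sol_def by blast
    moreover have "deriv (Psi nu mu u) x = Psi' x" for x by (rule DERIV_imp_deriv[OF dPsi])
    ultimately have "odesol p q k V V' V''"
      unfolding odesol_def Aop_def p_def q_def k_def Ps_def by (simp add: algebra_simps)
    thus ?thesis by blast
  qed
  define Kp where "Kp = mu * M / nu"
  have Kp: "Kp \<ge> 0" using mu M nu by (simp add: Kp_def)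
  define P0 where "P0 = \<bar>c\<bar> + chi * (mu * M / (2 * sqrt nu))"
  have pb: "\<bar>p x\<bar> \<le> P0" for x
  proof -
    have "\<bar>chi * Psi' x\<bar> = chi * \<bar>Psi' x\<bar>" using chi by (simp add: abs_mult)
    also have "\<dots> \<le> chi * (mu * M / (2 * sqrt nu))"
      using Psi'b[of x] chi by (intro mult_left_mono) auto
    finally have "\<bar>chi * Psi' x\<bar> \<le> chi * (mu * M / (2 * sqrt nu))" .
    thus ?thesis unfolding p_def P0_def by linarith
  qed
  define Q where "Q = \<bar>rm\<bar> + rstar + chi * nu * Kp + k * M"
  have qb: "\<bar>q x - k * V x\<bar> \<le> Q" if "0 \<le> V x" "V x \<le> M" for V x
  proof -
    have "\<bar>r x\<bar> \<le> \<bar>rm\<bar> + rstar" using r_range rstar_pos by (smt (verit))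
    moreover have "0 \<le> chi * nu * Ps x" "chi * nu * Ps x \<le> chi * nu * Kp"
      using Psib[of x] chi nu by (auto simp: Ps_def Kp_def field_simps)
    moreover have "0 \<le> k * V x" "k * V x \<le> k * M" using that k by auto
    ultimately show ?thesis unfolding q_def Q_def by linarith
  qed
  define L where "L = \<bar>c\<bar> + chi * Kp"
  have PL: "P y \<le> P x + L" if "y \<in> {x..x+1}" for x y
  proof -
    have "c * y - c * x \<le> \<bar>c\<bar>"
    proof -
      have "c * y - c * x = c * (y - x)" by (simp add: algebra_simps)
      also have "\<dots> \<le> \<bar>c\<bar> * \<bar>y - x\<bar>" by (metis abs_ge_self abs_mult)
      also have "\<dots> \<le> \<bar>c\<bar> * 1" using that by (intro mult_left_mono) auto
      finally show ?thesis by simp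
    qed
    moreover have "0 \<le> chi * Ps y" using Psib[of y] chi by (simp add: Ps_def)
    moreover have "chi * Ps x \<le> chi * Kp"
      using Psib[of x] chi unfolding Ps_def Kp_def by (intro mult_left_mono) auto
    ultimately show ?thesis unfolding P_def L_def by linarith
  qed
  define C0 where "C0 = exp L * (2 + Q)"
  have grad: "\<bar>V' x\<bar> \<le> C0 * M \<and> \<bar>V' x\<bar> \<le> C0 * (M * exp (theta1 * (x + 1 - x1)))"
    if "V \<in> E" "odesol p q k V V' V''" for V V' V'' x
  proof
    show "\<bar>V' x\<bar> \<le> C0 * M" unfolding C0_def
      by (rule grad_bound[OF that(2) dP PL]) (use Ebd[OF that(1)] qb in auto)
    have "\<bar>V' x\<bar> \<le> exp L * (2 + Q) * (M * exp (theta1 * (x + 1 - x1)))"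
    proof (rule grad_bound[OF that(2) dP PL])
      fix y assume y: "y \<in> {x..x+1}"
      show "\<bar>q y - k * V y\<bar> \<le> Q" using Ebd[OF that(1)] qb by auto
      have "\<bar>V y\<bar> \<le> M * exp (theta1 * (y - x1))" using Ebd[OF that(1), of y] by auto
      also have "\<dots> \<le> M * exp (theta1 * (x + 1 - x1))"
        using y theta1 M by (intro mult_left_mono) (auto intro!: mult_left_mono)
      finally show "\<bar>V y\<bar> \<le> M * exp (theta1 * (x + 1 - x1))" .
    qed
    thus "\<bar>V' x\<bar> \<le> C0 * (M * exp (theta1 * (x + 1 - x1)))" by (simp add: C0_def)
  qed
  have lam: "c + 2 * theta1 > 0"
  proof -
    have "theta1 * (theta1 + c) = - r1" using theta1(2) by (simp add: power2_eq_square algebra_simps)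
    hence "theta1 * (theta1 + c) > 0" using r1 by simp
    hence "theta1 + c > 0" using theta1(1) by (simp add: zero_less_mult_iff)
    thus ?thesis using theta1(1) by simp
  qed
  have Wlim: "((\<lambda>x. exp (P x) * (V1' x * V2 x - V1 x * V2' x)) \<longlongrightarrow> 0) at_bot"
    if "V1 \<in> E" "odesol p q k V1 V1' V1''" "V2 \<in> E" "odesol p q k V2 V2' V2''" for V1 V1' V1'' V2 V2' V2''
  proof (rule Lim_null_comparison)
    define g where "g = (\<lambda>x. 2 * C0 * M * M * exp (theta1 * (1 - 2 * x1)) * exp ((c + 2 * theta1) * x))"
    show "(g \<longlongrightarrow> 0) at_bot" unfolding g_def
      by (rule tendsto_mult_right_zero[OF exp_lin_at_bot[OF lam]])
    show "\<forall>\<^sub>F x in at_bot. norm (exp (P x) * (V1' x * V2 x - V1 x * V2' x)) \<le> g x"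
    proof (rule always_eventually, rule allI)
      fix x
      define A1 where "A1 = C0 * (M * exp (theta1 * (x + 1 - x1)))"
      define A2 where "A2 = M * exp (theta1 * (x - x1))"
      have a1: "\<bar>V1' x\<bar> \<le> A1" "\<bar>V2' x\<bar> \<le> A1" using grad that by (auto simp: A1_def)
      have a2: "\<bar>V1 x\<bar> \<le> A2" "\<bar>V2 x\<bar> \<le> A2" using Ebd that by (auto simp: A2_def)
      have A2: "A2 \<ge> 0" using M by (simp add: A2_def)
      have "\<bar>V1' x * V2 x - V1 x * V2' x\<bar> \<le> \<bar>V1' x\<bar> * \<bar>V2 x\<bar> + \<bar>V1 x\<bar> * \<bar>V2' x\<bar>"
        by (metis abs_mult abs_triangle_ineq4)
      also have "\<dots> \<le> A1 * A2 + A2 * A1"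
        using a1 a2 A2 by (intro add_mono mult_mono) auto
      finally have t1: "\<bar>V1' x * V2 x - V1 x * V2' x\<bar> \<le> 2 * A1 * A2" by simp
      have "exp (P x) \<le> exp (c * x)"
        using Psib[of x] chi by (simp add: P_def Ps_def)
      hence "norm (exp (P x) * (V1' x * V2 x - V1 x * V2' x)) \<le> exp (c * x) * (2 * A1 * A2)"
        using t1 by (simp add: abs_mult) (intro mult_mono, auto)
      also have "\<dots> = g x"
      proof -
        have "exp (c * x) * exp (theta1 * (x + 1 - x1)) * exp (theta1 * (x - x1))
            = exp (theta1 * (1 - 2 * x1)) * exp ((c + 2 * theta1) * x)"
        proof -
          have "exp (c * x) * exp (theta1 * (x + 1 - x1)) * exp (theta1 * (x - x1))
              = exp (c * x + theta1 * (x + 1 - x1) + theta1 * (x - x1))" by (simp only: exp_add)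
          also have "c * x + theta1 * (x + 1 - x1) + theta1 * (x - x1) = theta1 * (1 - 2 * x1) + (c + 2 * theta1) * x"
            by (simp add: algebra_simps)
          also have "exp (theta1 * (1 - 2 * x1) + (c + 2 * theta1) * x) = exp (theta1 * (1 - 2 * x1)) * exp ((c + 2 * theta1) * x)"
            by (simp only: exp_add)
          finally show ?thesis .
        qed
        thus ?thesis unfolding g_def A1_def A2_def
          by (metis (no_types, lifting) mult.assoc mult.left_commute)
      qed
      finally show "norm (exp (P x) * (V1' x * V2 x - V1 x * V2' x)) \<le> g x" .
    qed
  qed
  define A0 where "A0 = ((rstar - eps) * (b - chi * mu) - chi * mu * rstar) / (b - chi * mu) ^ 2"
  have A0: "A0 > 0"
  proof -
    have "eps * k < rstar * (b - 2 * chi * mu)" using eps(2) k by (simp add: k_def pos_less_divide_eq)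
    hence "(rstar - eps) * k - chi * mu * rstar > 0" by (simp add: k_def algebra_simps)
    thus ?thesis using k by (simp add: A0_def k_def)
  qed
  have "(phi \<longlongrightarrow> A0) at_bot" using wave by (simp add: decr_tw_def A0_def)
  hence "\<forall>\<^sub>F s in at_bot. A0 / 2 < phi s" by (rule order_tendstoD) (use A0 in simp)
  then obtain S0 where S0: "\<And>s. s \<le> S0 \<Longrightarrow> A0 / 2 < phi s" by (auto simp: eventually_at_bot_linorder)
  define X0 where "X0 = h - S0"
  have lbE: "A0 / 2 \<le> V x" if "V \<in> E" "x \<ge> X0" for V x
  proof -
    have "A0 / 2 < phi (h - x)" using S0 that(2) by (simp add: X0_def)
    also have "\<dots> \<le> U1minus phi h x" by (simp add: U1minus_def)
    also have "\<dots> \<le> V x" using Ebd[OF that(1)] by simp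
    finally show ?thesis by simp
  qed
  have UsE: "Ustar \<in> E" using Ustar_E1 by (simp add: E_def)
  obtain Us' Us'' where sUs: "odesol p q k Ustar Us' Us''" using conv[OF Ustar_sol] by blast
  have Uspos: "Ustar x > 0" for x
  proof (rule pos_sol[OF sUs])
    show "0 \<le> Ustar x" for x using Ebd[OF UsE] by simp
    show "\<bar>p x\<bar> \<le> P0" for x by (rule pb)
    show "\<bar>q x - k * Ustar x\<bar> \<le> Q" for x using Ebd[OF UsE, of x] by (intro qb) auto
    show "Ustar X0 > 0" using lbE[OF UsE, of X0] A0 by simp
  qed
  have uniq: "V = Ustar" if VE: "V \<in> E" and Vpos: "\<forall>x. V x > 0" and Vsol: "elliptic_sol chi nu mu b c r u V" for V
  proof
    fix x
    obtain V' V'' where sV: "odesol p q k V V' V''" using conv[OF Vsol] by blast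
    have lb: "A0 / 2 \<le> V x \<and> A0 / 2 \<le> Ustar x" if "x \<ge> X0" for x
      using lbE[OF VE that] lbE[OF UsE that] by simp
    have lb': "A0 / 2 \<le> Ustar x \<and> A0 / 2 \<le> V x" if "x \<ge> X0" for x
      using lbE[OF VE that] lbE[OF UsE that] by simp
    have "V x \<le> Ustar x"
      by (rule compare[OF sV sUs dP k, where M=M and ?C1.0="C0 * M" and ?X0.0=X0 and \<delta>="A0/2" and ?P0.0=P0])
         (use Vpos Uspos lb pb Ebd[OF VE] Ebd[OF UsE] A0 grad[OF UsE sUs] Wlim[OF VE sV UsE sUs] in auto)
    moreover have "Ustar x \<le> V x"
      by (rule compare[OF sUs sV dP k, where M=M and ?C1.0="C0 * M" and ?X0.0=X0 and \<delta>="A0/2" and ?P0.0=P0])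
         (use Vpos Uspos lb' pb Ebd[OF VE] Ebd[OF UsE] A0 grad[OF VE sV] Wlim[OF UsE sUs VE sV] in auto)
    ultimately show "V x = Ustar x" by simp
  qed
  show ?thesis using Uspos uniq by (auto simp: E_def)
qed

end
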